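(* For every integer $T>0$ and real $\lambda>0$: (i) with $r=\sqrt{(T+1)n}$ and $n\ge r^2/\lambda^2$, $\mathsf{VC}\text{-}\mathsf{dim}\big(\mathbb{H}_{r,\lambda}(\mathcal{E}_{\mathsf{WLOA}}(n,d_T))\big)\in\Theta(r^2/\lambda^2)$; (ii) with $r=\sqrt{T/(T+1)}$ and $n\ge r^2/\lambda^2$, $\mathsf{VC}\text{-}\mathsf{dim}\big(\mathbb{H}_{1,\lambda}(\overline{\mathcal{E}}_{\mathsf{WLOA}}(n,d_T))\big)\in\Theta(1/\lambda^2)$.
   Context: $\mathcal{G}_n$ is the set of (unlabeled, simple, undirected) graphs on $n$ vertices. $1$-WL colouring: $C^1_0$ constant, $C^1_t(v)=\mathsf{RELABEL}(C^1_{t-1}(v),\{\!\{C^1_{t-1}(u):u\in N(v)\}\!\})$ with a fixed injective $\mathsf{RELABEL}$ shared by all graphs; $\Sigma_t$ is the set of colours at round $t$ over all of $\mathcal{G}_n$ and $\phi_t(G)_c$ is the number of vertices of $G$ with colour $c$ at round $t$. The Weisfeiler–Leman optimal assignment feature map $\phi^{(T)}_{\mathsf{WLOA}}(G)\in\{0,1\}^{d_T}$ has one coordinate for each triple $(t,c,j)$ with $t\in\{0,\dots,T\}$, $c\in\Sigma_t$, $j\in\{1,\dots,n\}$, equal to $1$ if $\phi_t(G)_c\ge j$ and $0$ otherwise (so $\langle\phi^{(T)}_{\mathsf{WLOA}}(G),\phi^{(T)}_{\mathsf{WLOA}}(H)\rangle=\sum_{t=0}^T\sum_{c\in\Sigma_t}\min(\phi_t(G)_c,\phi_t(H)_c)$).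 $\overline{\phi^{(T)}_{\mathsf{WLOA}}}$ is its normalisation to unit Euclidean norm; $\mathcal{E}_{\mathsf{WLOA}}(n,d_T)=\{\phi^{(T)}_{\mathsf{WLOA}}\}$, $\overline{\mathcal{E}}_{\mathsf{WLOA}}(n,d_T)=\{\overline{\phi^{(T)}_{\mathsf{WLOA}}}\}$. A sample $(\mathbf{x}_i,y_i)\subset\mathbb{R}^d\times\{0,1\}$ is $(r,\lambda)$-separable if the points lie in a ball of radius $r$ and the distance between the convex hulls of the two classes is at least $2\lambda$. $\mathbb{H}_{r,\lambda}(\mathcal{E})$ is the set of partial concepts $h:\mathcal{G}_n\to\{0,1,\star\}$ such that every finite list of graphs with $h\neq\star$, labelled by $h$ and embedded by some $\mathrm{emb}\in\mathcal{E}$, is $(r,\lambda)$-separable. VC dimension: largest size of a set shattered by the class (every $0/1$ pattern realised). *)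

theory Defs
  imports "HOL-Analysis.Analysis" "HOL-Library.Multiset"
begin

definition lgraphs :: "nat \<Rightarrow> (nat \<times> nat) set set" where
  "lgraphs n = {E. E \<subseteq> {0..<n} \<times> {0..<n} \<and> sym E \<and> (\<forall>v. (v, v) \<notin> E)}"

definition graph_iso :: "nat \<Rightarrow> (nat \<times> nat) set \<Rightarrow> (nat \<times> nat) set \<Rightarrow> bool" where
  "graph_iso n E F = (\<exists>p. bij_betw p {0..<n} {0..<n} \<and> F = (\<lambda>(u, v). (p u, p v)) ` E)"

text \<open>Unlabelled graphs on n vertices = isomorphism classes of labelled graphs.\<close>
definition Gn :: "nat \<Rightarrow> (nat \<times> nat) set set set" where
  "Gn n = (\<lambda>E. {F \<in> lgraphs n. graph_iso n E F}) ` lgraphs n"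

section \<open>1-WL colours (RELABEL = the injective constructor Step)\<close>

datatype wlcol = Init | Step wlcol "wlcol multiset"

fun wl :: "(nat \<times> nat) set \<Rightarrow> nat \<Rightarrow> nat \<Rightarrow> wlcol" where
  "wl E 0 v = Init"
| "wl E (Suc t) v = Step (wl E t v) (image_mset (wl E t) (mset_set {u. (v, u) \<in> E}))"

definition Sigma :: "nat \<Rightarrow> nat \<Rightarrow> wlcol set" where
  "Sigma n t = {wl E t v | E v. E \<in> lgraphs n \<and> v < n}"

definition colcount :: "nat \<Rightarrow> (nat \<times> nat) set \<Rightarrow> nat \<Rightarrow> wlcol \<Rightarrow> nat" where
  "colcount n E t c = card {v \<in> {0..<n}. wl E t v = c}"

type_synonym coord = "nat \<times> wlcol \<times> nat"

definition wloa_coords :: "nat \<Rightarrow> nat \<Rightarrow> coord set" where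
  "wloa_coords n T = {(t, c, j). t \<le> T \<and> c \<in> Sigma n t \<and> 1 \<le> j \<and> j \<le> n}"

definition wloa_lab :: "nat \<Rightarrow> nat \<Rightarrow> (nat \<times> nat) set \<Rightarrow> coord \<Rightarrow> real" where
  "wloa_lab n T E = (\<lambda>(t, c, j). if (t, c, j) \<in> wloa_coords n T \<and> j \<le> colcount n E t c then 1 else 0)"

definition wloa :: "nat \<Rightarrow> nat \<Rightarrow> (nat \<times> nat) set set \<Rightarrow> coord \<Rightarrow> real" where
  "wloa n T G = wloa_lab n T (SOME E. E \<in> G)"

definition l2norm :: "coord set \<Rightarrow> (coord \<Rightarrow> real) \<Rightarrow> real" where
  "l2norm D x = sqrt (\<Sum>k\<in>D. (x k)\<^sup>2)"

definition l2dist :: "coord set \<Rightarrow> (coord \<Rightarrow> real) \<Rightarrow> (coord \<Rightarrow> real) \<Rightarrow> real" where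
  "l2dist D x y = l2norm D (\<lambda>k. x k - y k)"

definition wloa_norm :: "nat \<Rightarrow> nat \<Rightarrow> (nat \<times> nat) set set \<Rightarrow> coord \<Rightarrow> real" where
  "wloa_norm n T G = (\<lambda>k. wloa n T G k / l2norm (wloa_coords n T) (wloa n T G))"

definition chull :: "(coord \<Rightarrow> real) set \<Rightarrow> (coord \<Rightarrow> real) set" where
  "chull P = {y. \<exists>S a. finite S \<and> S \<noteq> {} \<and> S \<subseteq> P \<and> (\<forall>x\<in>S. 0 \<le> a x) \<and> sum a S = 1
                   \<and> y = (\<lambda>k. \<Sum>x\<in>S. a x * x k)}"

text \<open>Class-1 points P1, class-0 points P0: they lie in a (closed) ball of radius r and
  the distance between their convex hulls is at least 2 lambda (vacuous if a class is empty).\<close>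
definition separable :: "coord set \<Rightarrow> real \<Rightarrow> real \<Rightarrow> (coord \<Rightarrow> real) set \<Rightarrow> (coord \<Rightarrow> real) set \<Rightarrow> bool" where
  "separable D r lam P1 P0 \<longleftrightarrow>
     (\<exists>c. \<forall>x \<in> P1 \<union> P0. l2dist D c x \<le> r) \<and>
     (\<forall>x \<in> chull P1. \<forall>y \<in> chull P0. 2 * lam \<le> l2dist D x y)"

text \<open>Partial concepts: None = star, Some True = 1, Some False = 0.
  H_{r,lambda}(E) for the singleton embedding family E = {emb}.\<close>
definition Hclass :: "nat \<Rightarrow> coord set \<Rightarrow> real \<Rightarrow> real \<Rightarrow> ((nat \<times> nat) set set \<Rightarrow> coord \<Rightarrow> real)
     \<Rightarrow> ((nat \<times> nat) set set \<Rightarrow> bool option) set" where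
  "Hclass n D r lam emb = {h. (\<forall>G. G \<notin> Gn n \<longrightarrow> h G = None) \<and>
     (\<forall>S. finite S \<and> S \<subseteq> {G \<in> Gn n. h G \<noteq> None} \<longrightarrow>
        separable D r lam (emb ` {G \<in> S. h G = Some True}) (emb ` {G \<in> S. h G = Some False}))}"

definition shatters :: "('a \<Rightarrow> bool option) set \<Rightarrow> 'a set \<Rightarrow> bool" where
  "shatters H S \<longleftrightarrow> (\<forall>f :: 'a \<Rightarrow> bool. \<exists>h \<in> H. \<forall>x \<in> S. h x = Some (f x))"

definition vc_dim :: "('a \<Rightarrow> bool option) set \<Rightarrow> 'a set \<Rightarrow> nat" where
  "vc_dim H X = Max {card S | S. S \<subseteq> X \<and> finite S \<and> shatters H S}"

end

theory Submission
  imports Defs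
begin


definition Q :: "coord set \<Rightarrow> (coord \<Rightarrow> real) \<Rightarrow> real" where
  "Q D w = (\<Sum>k\<in>D. (w k)\<^sup>2)"

lemma Q_nonneg: "0 \<le> Q D w"
  unfolding Q_def by (intro sum_nonneg) auto

lemma l2dist_Q: "l2dist D x y = sqrt (Q D (\<lambda>k. x k - y k))"
  unfolding l2dist_def l2norm_def Q_def by simp

lemma Q_add: "Q D (\<lambda>x. v x + w x) = Q D v + 2 * (\<Sum>x\<in>D. v x * w x) + Q D w"
  unfolding Q_def by (simp add: power2_sum sum.distrib sum_distrib_left algebra_simps)

lemma Q_diff: "Q D (\<lambda>x. v x - w x) = Q D v - 2 * (\<Sum>x\<in>D. v x * w x) + Q D w"
  unfolding Q_def by (simp add: power2_diff sum.distrib sum_subtractf sum_distrib_left algebra_simps)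

lemma greedy:
  fixes k :: nat
  shows "\<exists>\<sigma>. Q D (\<lambda>x. \<Sum>i<k. (if \<sigma> i then d i x else - d i x)) \<le> (\<Sum>i<k. Q D (d i))"
proof (induction k)
  case 0
  then show ?case by (simp add: Q_def)
next
  case (Suc k)
  then obtain \<sigma> where s: "Q D (\<lambda>x. \<Sum>i<k. (if \<sigma> i then d i x else - d i x)) \<le> (\<Sum>i<k. Q D (d i))"
    by blast
  define v where "v = (\<lambda>x. \<Sum>i<k. (if \<sigma> i then d i x else - d i x))"
  define ip where "ip = (\<Sum>x\<in>D. v x * d k x)"
  define \<sigma>' where "\<sigma>' = \<sigma>(k := (ip \<le> 0))"
  have e: "(\<lambda>x. \<Sum>i<Suc k. (if \<sigma>' i then d i x else - d i x))
      = (\<lambda>x. v x + (if ip \<le> 0 then d k x else - d k x))"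
    unfolding v_def \<sigma>'_def by (auto intro!: sum.cong)
  have qd: "Q D (\<lambda>x. - d k x) = Q D (d k)" unfolding Q_def by simp
  have "Q D (\<lambda>x. v x + (if ip \<le> 0 then d k x else - d k x)) \<le> Q D v + Q D (d k)"
  proof (cases "ip \<le> 0")
    case True
    then show ?thesis using Q_add[of D v "d k"] ip_def by simp
  next
    case False
    have "(\<Sum>x\<in>D. v x * - d k x) = - ip" unfolding ip_def by (simp add: sum_negf)
    then show ?thesis using Q_add[of D v "\<lambda>x. - d k x"] False qd by simp
  qed
  then show ?case using s e v_def by (intro exI[of _ \<sigma>']) simp
qed

lemma cs_sum:
  assumes "finite I" "I \<noteq> {}" "sum a I = 1"
  shows "1 / real (card I) \<le> (\<Sum>i\<in>I. (a i)\<^sup>2)"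
proof -
  define c where "c = real (card I)"
  have c: "c > 0" using assms c_def by (simp add: card_gt_0_iff)
  have "0 \<le> (\<Sum>i\<in>I. (a i - 1/c)\<^sup>2)" by (intro sum_nonneg) auto
  also have "\<dots> = (\<Sum>i\<in>I. (a i)\<^sup>2) - 2/c * sum a I + c * (1/c)\<^sup>2"
    by (simp add: power2_diff sum.distrib sum_subtractf sum_distrib_left c_def algebra_simps)
      (simp add: sum_divide_distrib[symmetric] sum_distrib_right[symmetric])
  also have "\<dots> = (\<Sum>i\<in>I. (a i)\<^sup>2) - 1/c"
    using c assms(3) by (simp add: power2_eq_square field_simps)
  finally show ?thesis unfolding c_def by simp
qed



lemma sq_ineq: "((p::real) - q)\<^sup>2 \<le> 2 * (c - p)\<^sup>2 + 2 * (c - q)\<^sup>2"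
proof -
  have "0 \<le> (2 * c - p - q)\<^sup>2" by simp
  moreover have "2 * (c - p)\<^sup>2 + 2 * (c - q)\<^sup>2 = (p - q)\<^sup>2 + (2 * c - p - q)\<^sup>2"
    by (simp add: power2_eq_square algebra_simps)
  ultimately show ?thesis by linarith
qed

lemma chull_single: "x \<in> P \<Longrightarrow> x \<in> chull P"
  unfolding chull_def by (intro CollectI exI[of _ "{x}"] exI[of _ "\<lambda>_. 1"]) auto

lemma chull_empty: "chull {} = {}"
  unfolding chull_def by auto

lemma finite_lgraphs: "finite (lgraphs n)"
proof -
  have "lgraphs n \<subseteq> Pow ({0..<n} \<times> {0..<n})" unfolding lgraphs_def by auto
  then show ?thesis by (rule finite_subset) auto
qed

lemma finite_Gn: "finite (Gn n)"
  unfolding Gn_def using finite_lgraphs by simp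

lemma Q_scale: "Q D (\<lambda>x. c * w x) = c\<^sup>2 * Q D w"
  unfolding Q_def by (simp add: power_mult_distrib sum_distrib_left)

lemma Q_le_of_dist: assumes "l2dist D c y \<le> r" shows "Q D (\<lambda>x. c x - y x) \<le> r\<^sup>2"
proof -
  have "sqrt (Q D (\<lambda>x. c x - y x)) \<le> r" using assms l2dist_Q by metis
  moreover have "0 \<le> sqrt (Q D (\<lambda>x. c x - y x))" using Q_nonneg by simp
  ultimately have "(sqrt (Q D (\<lambda>x. c x - y x)))\<^sup>2 \<le> r\<^sup>2" by (rule power_mono)
  then show ?thesis using Q_nonneg[of D "(\<lambda>x. c x - y x)"] by simp
qed

lemma sep_from_H:
  assumes "h \<in> Hclass n D r lam emb" "finite S" "S \<subseteq> Gn n" "\<forall>x\<in>S. h x \<noteq> None"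
  shows "separable D r lam (emb ` {G \<in> S. h G = Some True}) (emb ` {G \<in> S. h G = Some False})"
  using assms unfolding Hclass_def by auto

lemma emb_inj:
  assumes lam: "lam > 0" and S: "S \<subseteq> Gn n" "finite S" and sh: "shatters (Hclass n D r lam emb) S"
  shows "inj_on emb S"
proof (rule inj_onI, rule ccontr)
  fix G G' assume G: "G \<in> S" "G' \<in> S" "emb G = emb G'" "G \<noteq> G'"
  obtain h where h: "h \<in> Hclass n D r lam emb" "\<forall>x\<in>S. h x = Some (x = G)"
    using sh unfolding shatters_def by (elim allE[where x="\<lambda>x. x = G"]) blast
  have sep: "separable D r lam (emb ` {x \<in> S. h x = Some True}) (emb ` {x \<in> S. h x = Some False})"
    using sep_from_H[OF h(1) S(2) S(1)] h(2) by auto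
  have "emb G \<in> chull (emb ` {x \<in> S. h x = Some True})"
    using G h(2) by (intro chull_single image_eqI[OF refl]) auto
  moreover have "emb G' \<in> chull (emb ` {x \<in> S. h x = Some False})"
    using G h(2) by (intro chull_single image_eqI[OF refl]) auto
  ultimately have "2 * lam \<le> l2dist D (emb G) (emb G')"
    using sep unfolding separable_def by blast
  moreover have "l2dist D (emb G) (emb G') = 0" using G(3) by (simp add: l2dist_Q Q_def)
  ultimately show False using lam by simp
qed

lemma card_bound:
  assumes lam: "lam > 0" and S: "S \<subseteq> Gn n" "finite S" and sh: "shatters (Hclass n D r lam emb) S"
  shows "real (card S) \<le> 2 * (r\<^sup>2 / lam\<^sup>2) + 1"
proof (cases "card S < 2")
  case True
  have "0 \<le> r\<^sup>2 / lam\<^sup>2" by simp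
  then show ?thesis using True by linarith
next
  case False
  define m where "m = card S"
  obtain e where e: "bij_betw e {0..<m} S" using ex_bij_betw_nat_finite S(2) m_def by blast
  have einj: "inj_on e {0..<m}" using e by (simp add: bij_betw_def)
  have eS: "\<And>p. p < m \<Longrightarrow> e p \<in> S" using e by (auto simp: bij_betw_def)
  define k where "k = m div 2"
  have k1: "k \<ge> 1" and km: "2*k \<le> m" using False unfolding k_def m_def by auto
  have embinj: "inj_on emb S" using emb_inj[OF lam S sh] .
  define d where "d i = (\<lambda>x. emb (e (2*i)) x - emb (e (2*i+1)) x)" for i
  obtain \<sigma> where sg: "Q D (\<lambda>x. \<Sum>i<k. if \<sigma> i then d i x else - d i x) \<le> (\<Sum>i<k. Q D (d i))"
    using greedy by blast
  define p1 where "p1 i = (if \<sigma> i then 2*i else 2*i+1)" for i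
  define p0 where "p0 i = (if \<sigma> i then 2*i+1 else 2*i)" for i
  have p1m: "i < k \<Longrightarrow> p1 i < m" for i using km unfolding p1_def by auto
  have p0m: "i < k \<Longrightarrow> p0 i < m" for i using km unfolding p0_def by auto
  have p1inj: "p1 i = p1 j \<Longrightarrow> i = j" for i j unfolding p1_def by (auto split: if_splits)
  have p0inj: "p0 i = p0 j \<Longrightarrow> i = j" for i j unfolding p0_def by (auto split: if_splits)
  have p10: "p1 i \<noteq> p0 j" for i j unfolding p1_def p0_def by (auto split: if_splits; presburger)
  define f where "f G = (\<exists>i<k. G = e (p1 i))" for G
  have f1: "i < k \<Longrightarrow> f (e (p1 i))" for i unfolding f_def by auto
  have f0: "i < k \<Longrightarrow> \<not> f (e (p0 i))" for i
  proof
    assume "i < k" "f (e (p0 i))"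
    then obtain j where j: "j < k" "e (p0 i) = e (p1 j)" unfolding f_def by auto
    then have "p0 i = p1 j" using inj_onD[OF einj] p0m p1m \<open>i < k\<close> by auto
    then show False using p10 by metis
  qed
  obtain h where h: "h \<in> Hclass n D r lam emb" "\<forall>x\<in>S. h x = Some (f x)"
    using sh unfolding shatters_def by blast
  define P1 where "P1 = emb ` {x \<in> S. h x = Some True}"
  define P0 where "P0 = emb ` {x \<in> S. h x = Some False}"
  have sep: "separable D r lam P1 P0"
    unfolding P1_def P0_def using sep_from_H[OF h(1) S(2) S(1)] h(2) by auto
  obtain c where c: "\<forall>x\<in>P1 \<union> P0. l2dist D c x \<le> r"
    and hull: "\<forall>x\<in>chull P1. \<forall>y\<in>chull P0. 2 * lam \<le> l2dist D x y"
    using sep unfolding separable_def by blast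
  have inP1: "i < k \<Longrightarrow> emb (e (p1 i)) \<in> P1" for i
    unfolding P1_def using h(2) f1 eS p1m by auto
  have inP0: "i < k \<Longrightarrow> emb (e (p0 i)) \<in> P0" for i
    unfolding P0_def using h(2) f0 eS p0m by auto
  have inPP: "p < m \<Longrightarrow> emb (e p) \<in> P1 \<union> P0" for p
    unfolding P0_def P1_def using h(2) eS by (cases "f (e p)") auto
  have kpos: "real k > 0" using k1 by simp
  have cent: "(\<lambda>x. \<Sum>i<k. (1 / real k) * emb (e (pp i)) x) \<in> chull P"
    if pm: "\<And>i. i < k \<Longrightarrow> pp i < m" and pinj: "\<And>i j. pp i = pp j \<Longrightarrow> i = j"
      and inP: "\<And>i. i < k \<Longrightarrow> emb (e (pp i)) \<in> P" for pp P
  proof -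
    define g where "g i = emb (e (pp i))" for i
    have ginj: "inj_on g {..<k}"
    proof (rule inj_onI)
      fix i j assume "i \<in> {..<k}" "j \<in> {..<k}" "g i = g j"
      then have "e (pp i) = e (pp j)" using inj_onD[OF embinj] eS pm unfolding g_def by auto
      then have "pp i = pp j" using inj_onD[OF einj] pm \<open>i \<in> {..<k}\<close> \<open>j \<in> {..<k}\<close> by auto
      then show "i = j" by (rule pinj)
    qed
    have cardg: "card (g ` {..<k}) = k" using card_image[OF ginj] by simp
    show ?thesis unfolding chull_def
    proof (intro CollectI exI[of _ "g ` {..<k}"] exI[of _ "\<lambda>_. 1 / real k"] conjI)
      show "finite (g ` {..<k})" by simp
      show "g ` {..<k} \<noteq> {}" using k1 by (auto simp: lessThan_empty_iff)
      show "g ` {..<k} \<subseteq> P" using inP unfolding g_def by auto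
      show "\<forall>x\<in>g ` {..<k}. 0 \<le> 1 / real k" by simp
      show "(\<Sum>x\<in>g ` {..<k}. 1 / real k) = 1" using cardg kpos by simp
      show "(\<lambda>x. \<Sum>i<k. 1 / real k * emb (e (pp i)) x) = (\<lambda>ka. \<Sum>x\<in>g ` {..<k}. 1 / real k * x ka)"
        by (rule ext, subst sum.reindex[OF ginj]) (simp add: g_def)
    qed
  qed
  define u where "u = (\<lambda>x. \<Sum>i<k. (1 / real k) * emb (e (p1 i)) x)"
  define v where "v = (\<lambda>x. \<Sum>i<k. (1 / real k) * emb (e (p0 i)) x)"
  have u: "u \<in> chull P1" unfolding u_def by (rule cent) (use p1m p1inj inP1 in auto)
  have v: "v \<in> chull P0" unfolding v_def by (rule cent) (use p0m p0inj inP0 in auto)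
  have l: "2 * lam \<le> sqrt (Q D (\<lambda>x. u x - v x))" using hull u v l2dist_Q by metis
  have "(2 * lam)\<^sup>2 \<le> (sqrt (Q D (\<lambda>x. u x - v x)))\<^sup>2"
    using l lam by (intro power_mono) auto
  then have l2: "4 * lam\<^sup>2 \<le> Q D (\<lambda>x. u x - v x)" using Q_nonneg by (simp add: power_mult_distrib)
  have uv: "(\<lambda>x. u x - v x) = (\<lambda>x. (1 / real k) * (\<Sum>i<k. if \<sigma> i then d i x else - d i x))"
  proof (rule ext)
    fix x
    have "(\<Sum>i<k. (1 / real k) * emb (e (p1 i)) x) - (\<Sum>i<k. (1 / real k) * emb (e (p0 i)) x)
       = (\<Sum>i<k. (1 / real k) * (emb (e (p1 i)) x - emb (e (p0 i)) x))"
      by (simp only: right_diff_distrib sum_subtractf)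
    also have "\<dots> = (1 / real k) * (\<Sum>i<k. if \<sigma> i then d i x else - d i x)"
      unfolding sum_distrib_left
      by (intro sum.cong refl) (simp add: p1_def p0_def d_def)
    finally show "u x - v x = (1 / real k) * (\<Sum>i<k. if \<sigma> i then d i x else - d i x)"
      unfolding u_def v_def .
  qed
  have Qd: "Q D (d i) \<le> 4 * r\<^sup>2" if i: "i < k" for i
  proof -
    have a1: "Q D (\<lambda>x. c x - emb (e (2*i)) x) \<le> r\<^sup>2"
      using c inPP[of "2*i"] i km by (intro Q_le_of_dist) auto
    have a2: "Q D (\<lambda>x. c x - emb (e (2*i+1)) x) \<le> r\<^sup>2"
      using c inPP[of "2*i+1"] i km by (intro Q_le_of_dist) auto
    have "Q D (d i) \<le> 2 * Q D (\<lambda>x. c x - emb (e (2*i)) x) + 2 * Q D (\<lambda>x. c x - emb (e (2*i+1)) x)"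
      unfolding Q_def d_def sum_distrib_left sum.distrib[symmetric]
    proof (rule sum_mono)
      fix x
      show "(emb (e (2 * i)) x - emb (e (2 * i + 1)) x)\<^sup>2
        \<le> 2 * (c x - emb (e (2 * i)) x)\<^sup>2 + 2 * (c x - emb (e (2 * i + 1)) x)\<^sup>2" (is "?l \<le> ?r")
        by (rule sq_ineq)
    qed
    then show ?thesis using a1 a2 by simp
  qed
  have "4 * lam\<^sup>2 \<le> (1 / real k)\<^sup>2 * Q D (\<lambda>x. \<Sum>i<k. if \<sigma> i then d i x else - d i x)"
    using l2 unfolding uv Q_scale .
  also have "\<dots> \<le> (1 / real k)\<^sup>2 * (\<Sum>i<k. Q D (d i))"
    using sg by (intro mult_left_mono) auto
  also have "\<dots> \<le> (1 / real k)\<^sup>2 * (\<Sum>i<k. 4 * r\<^sup>2)"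
    using Qd by (intro mult_left_mono sum_mono) auto
  also have "\<dots> = 4 * r\<^sup>2 / real k"
    using kpos by (simp add: power2_eq_square field_simps)
  finally have "lam\<^sup>2 * real k \<le> r\<^sup>2" using kpos by (simp add: field_simps)
  then have "real k \<le> r\<^sup>2 / lam\<^sup>2" using lam by (simp add: field_simps)
  moreover have "real m \<le> 2 * real k + 1" unfolding k_def by linarith
  ultimately show ?thesis unfolding m_def by linarith
qed



lemma None_in_H: "(\<lambda>_. None) \<in> Hclass n D r lam emb"
  unfolding Hclass_def separable_def by (auto simp: chull_empty)

lemma vc_set_finite: "finite {card S | S. S \<subseteq> Gn n \<and> finite S \<and> shatters H S}"
proof -
  have "{card S | S. S \<subseteq> Gn n \<and> finite S \<and> shatters H S} \<subseteq> card ` Pow (Gn n)" by auto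
  then show ?thesis by (rule finite_subset) (simp add: finite_Gn)
qed

lemma vc_lower: "S \<subseteq> Gn n \<Longrightarrow> shatters H S \<Longrightarrow> card S \<le> vc_dim H (Gn n)"
  unfolding vc_dim_def using vc_set_finite finite_subset[OF _ finite_Gn]
  by (intro Max_ge) auto

lemma vc_upper:
  assumes "lam > 0"
  shows "real (vc_dim (Hclass n D r lam emb) (Gn n)) \<le> 3 * max 1 (r\<^sup>2 / lam\<^sup>2)"
proof -
  let ?X = "{card S | S. S \<subseteq> Gn n \<and> finite S \<and> shatters (Hclass n D r lam emb) S}"
  have "shatters (Hclass n D r lam emb) {}" unfolding shatters_def using None_in_H by blast
  then have ne: "?X \<noteq> {}" by blast
  have "vc_dim (Hclass n D r lam emb) (Gn n) \<in> ?X"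
    unfolding vc_dim_def using vc_set_finite ne by (rule Max_in)
  then obtain S where S: "S \<subseteq> Gn n" "finite S" "shatters (Hclass n D r lam emb) S"
    "vc_dim (Hclass n D r lam emb) (Gn n) = card S" by auto
  have "real (card S) \<le> 2 * (r\<^sup>2 / lam\<^sup>2) + 1" by (rule card_bound[OF assms S(1-3)])
  also have "\<dots> \<le> 3 * max 1 (r\<^sup>2 / lam\<^sup>2)" by linarith
  finally show ?thesis using S(4) by simp
qed

lemma empty_lgraph: "{} \<in> lgraphs n"
  unfolding lgraphs_def sym_def by auto

lemma vc_ge1:
  assumes "0 \<le> r"
  shows "1 \<le> vc_dim (Hclass n D r lam emb) (Gn n)"
proof -
  obtain G0 where G0: "G0 \<in> Gn n" unfolding Gn_def using empty_lgraph by blast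
  have "shatters (Hclass n D r lam emb) {G0}"
    unfolding shatters_def
  proof
    fix f :: "(nat \<times> nat) set set \<Rightarrow> bool"
    define h where "h G = (if G = G0 then Some (f G0) else None)" for G
    have "h \<in> Hclass n D r lam emb"
      unfolding Hclass_def
    proof (intro CollectI conjI allI impI)
      fix G assume "G \<notin> Gn n" then show "h G = None" using G0 unfolding h_def by auto
    next
      fix S assume S: "finite S \<and> S \<subseteq> {G \<in> Gn n. h G \<noteq> None}"
      then have S0: "S \<subseteq> {G0}" unfolding h_def by (auto split: if_splits)
      show "separable D r lam (emb ` {G \<in> S. h G = Some True}) (emb ` {G \<in> S. h G = Some False})"
        unfolding separable_def
      proof (intro conjI)
        show "\<exists>c. \<forall>x\<in>emb ` {G \<in> S. h G = Some True} \<union> emb ` {G \<in> S. h G = Some False}. l2dist D c x \<le> r"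
          using S0 assms by (intro exI[of _ "emb G0"]) (auto simp: l2dist_Q Q_def)
        show "\<forall>x\<in>chull (emb ` {G \<in> S. h G = Some True}). \<forall>y\<in>chull (emb ` {G \<in> S. h G = Some False}). 2 * lam \<le> l2dist D x y"
        proof (cases "f G0")
          case True
          then have "{G \<in> S. h G = Some False} = {}" using S0 unfolding h_def by auto
          then show ?thesis by (metis chull_empty image_empty empty_iff)
        next
          case False
          then have "{G \<in> S. h G = Some True} = {}" using S0 unfolding h_def by auto
          then show ?thesis by (metis chull_empty image_empty empty_iff)
        qed
      qed
    qed
    moreover have "\<forall>x\<in>{G0}. h x = Some (f x)" unfolding h_def by simp
    ultimately show "\<exists>h\<in>Hclass n D r lam emb. \<forall>x\<in>{G0}. h x = Some (f x)" by blast
  qed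
  then show ?thesis using vc_lower[of "{G0}"] G0 by simp
qed

lemma hull_sep:
  fixes s :: real and N :: nat and a b :: "'i \<Rightarrow> real"
  assumes D: "finite D" and I1: "finite I1" "I1 \<noteq> {}" and I0: "finite I0"
    and MD: "\<forall>i\<in>I1. M i \<subseteq> D" and MN: "\<forall>i\<in>I1. card (M i) = N"
    and CM: "\<forall>i\<in>I1 \<union> I0. C \<inter> M i = {}"
    and disj: "\<forall>i\<in>I1 \<union> I0. \<forall>j\<in>I1 \<union> I0. i \<noteq> j \<longrightarrow> M i \<inter> M j = {}"
    and I10: "I1 \<inter> I0 = {}" and a1: "sum a I1 = 1"
  shows "s\<^sup>2 * real N / card I1 \<le> (\<Sum>k\<in>D. ((\<Sum>i\<in>I1. a i * (if k \<in> C \<union> M i then s else 0))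
          - (\<Sum>j\<in>I0. b j * (if k \<in> C \<union> M j then s else 0)))\<^sup>2)"
    (is "_ \<le> (\<Sum>k\<in>D. (?F k)\<^sup>2)")
proof -
  have Fk: "?F k = a i * s" if i: "i \<in> I1" and k: "k \<in> M i" for i k
  proof -
    have "(\<Sum>i'\<in>I1. a i' * (if k \<in> C \<union> M i' then s else 0)) = a i * s"
    proof -
      have "(\<Sum>i'\<in>I1. a i' * (if k \<in> C \<union> M i' then s else 0))
          = a i * (if k \<in> C \<union> M i then s else 0) + (\<Sum>i'\<in>I1 - {i}. a i' * (if k \<in> C \<union> M i' then s else 0))"
        using I1(1) i by (simp add: sum.remove)
      also have "(\<Sum>i'\<in>I1 - {i}. a i' * (if k \<in> C \<union> M i' then s else 0)) = 0"
      proof (intro sum.neutral ballI)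
        fix i' assume i': "i' \<in> I1 - {i}"
        have "C \<inter> M i = {}" using CM i by simp
        moreover have "M i \<inter> M i' = {}" using disj i i' by (metis DiffE UnI1 singletonI)
        ultimately have "k \<notin> C \<union> M i'" using k by blast
        then show "a i' * (if k \<in> C \<union> M i' then s else 0) = 0" by simp
      qed
      finally show ?thesis using k by simp
    qed
    moreover have "(\<Sum>j\<in>I0. b j * (if k \<in> C \<union> M j then s else 0)) = 0"
    proof (intro sum.neutral ballI)
      fix i' assume i': "i' \<in> I0"
      have "C \<inter> M i = {}" using CM i by simp
      moreover have "i \<noteq> i'" using I10 i i' by blast
      then have "M i \<inter> M i' = {}" using disj i i' by simp
      ultimately have "k \<notin> C \<union> M i'" using k by blast
      then show "b i' * (if k \<in> C \<union> M i' then s else 0) = 0" by simp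
    qed
    ultimately show ?thesis by simp
  qed
  have fin: "\<And>i. i \<in> I1 \<Longrightarrow> finite (M i)" using MD D finite_subset by blast
  have "(\<Sum>k\<in>(\<Union>i\<in>I1. M i). (?F k)\<^sup>2) = (\<Sum>i\<in>I1. \<Sum>k\<in>M i. (?F k)\<^sup>2)"
    using disj fin I1(1) by (intro sum.UNION_disjoint) auto
  also have "\<dots> = (\<Sum>i\<in>I1. N * (a i * s)\<^sup>2)"
    using Fk MN by (intro sum.cong refl) simp
  also have "\<dots> = s\<^sup>2 * N * (\<Sum>i\<in>I1. (a i)\<^sup>2)"
    by (simp add: sum_distrib_left power_mult_distrib algebra_simps)
  finally have e: "(\<Sum>k\<in>(\<Union>i\<in>I1. M i). (?F k)\<^sup>2) = s\<^sup>2 * N * (\<Sum>i\<in>I1. (a i)\<^sup>2)" .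
  have "s\<^sup>2 * N / card I1 = s\<^sup>2 * N * (1 / card I1)" by simp
  also have "\<dots> \<le> s\<^sup>2 * N * (\<Sum>i\<in>I1. (a i)\<^sup>2)"
    using cs_sum[OF I1 a1] by (intro mult_left_mono) auto
  also have "\<dots> \<le> (\<Sum>k\<in>D. (?F k)\<^sup>2)"
    unfolding e[symmetric] using MD D by (intro sum_mono2) auto
  finally show ?thesis .
qed



lemma shatter_family:
  fixes s r lam :: real and N :: nat
  assumes D: "finite D" and I: "finite I"
    and MD: "\<forall>i\<in>I. M i \<subseteq> D" and MN: "\<forall>i\<in>I. card (M i) = N" and Npos: "N > 0"
    and CM: "\<forall>i\<in>I. C \<inter> M i = {}" and disj: "\<forall>i\<in>I. \<forall>j\<in>I. i \<noteq> j \<longrightarrow> M i \<inter> M j = {}"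
    and gG: "\<forall>i\<in>I. g i \<in> Gn n"
    and emb: "\<forall>i\<in>I. emb (g i) = (\<lambda>k. if k \<in> C \<union> M i then s else 0)"
    and s: "s > 0" and r: "0 \<le> r" and sr: "s\<^sup>2 * real N \<le> r\<^sup>2"
    and lamI: "4 * lam\<^sup>2 * card I \<le> s\<^sup>2 * real N" and lam: "lam > 0"
  shows "inj_on g I \<and> shatters (Hclass n D r lam emb) (g ` I)"
proof -
  have val: "emb (g i) k = (if k \<in> C \<union> M i then s else 0)" if "i \<in> I" for i k
    using emb that by simp
  have eginj: "inj_on (\<lambda>i. emb (g i)) I"
  proof (rule inj_onI, rule ccontr)
    fix i j assume ij: "i \<in> I" "j \<in> I" "emb (g i) = emb (g j)" "i \<noteq> j"
    have "M i \<noteq> {}" using MN Npos ij(1) by fastforce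
    then obtain x where x: "x \<in> M i" by blast
    have "C \<inter> M i = {}" using CM ij by simp
    moreover have "M i \<inter> M j = {}" using disj ij by simp
    ultimately have "x \<notin> C \<union> M j" using x by blast
    then have "emb (g j) x = 0" using val[OF ij(2), of x] by simp
    moreover have "emb (g i) x = s" using val[OF ij(1), of x] x by simp
    ultimately show False using ij(3) s by simp
  qed
  have ginj: "inj_on g I" using eginj by (auto simp: inj_on_def)
  have sh: "shatters (Hclass n D r lam emb) (g ` I)"
    unfolding shatters_def
  proof
    fix f :: "(nat \<times> nat) set set \<Rightarrow> bool"
    define h where "h G = (if G \<in> g ` I then Some (f G) else None)" for G
    have "h \<in> Hclass n D r lam emb"
      unfolding Hclass_def
    proof (intro CollectI conjI allI impI)
      fix G assume "G \<notin> Gn n" then show "h G = None" using gG unfolding h_def by auto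
    next
      fix S assume S: "finite S \<and> S \<subseteq> {G \<in> Gn n. h G \<noteq> None}"
      then have SI: "S \<subseteq> g ` I" unfolding h_def by (auto split: if_splits)
      define P1 where "P1 = emb ` {G \<in> S. h G = Some True}"
      define P0 where "P0 = emb ` {G \<in> S. h G = Some False}"
      have P1E: "\<exists>i\<in>I. x = emb (g i) \<and> f (g i)" if "x \<in> P1" for x
      proof -
        from that obtain G where G: "G \<in> S" "h G = Some True" "x = emb G" unfolding P1_def by blast
        then obtain i where i: "i \<in> I" "G = g i" using SI by blast
        have "f G" using G(2) SI G(1) unfolding h_def by (auto split: if_splits)
        then show ?thesis using G i by blast
      qed
      have P0E: "\<exists>i\<in>I. x = emb (g i) \<and> \<not> f (g i)" if "x \<in> P0" for x
      proof -
        from that obtain G where G: "G \<in> S" "h G = Some False" "x = emb G" unfolding P0_def by blast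
        then obtain i where i: "i \<in> I" "G = g i" using SI by blast
        have "\<not> f G" using G(2) SI G(1) unfolding h_def by (auto split: if_splits)
        then show ?thesis using G i by blast
      qed
      have ball: "\<exists>c. \<forall>x\<in>P1 \<union> P0. l2dist D c x \<le> r"
      proof (intro exI[of _ "\<lambda>k. if k \<in> C then s else 0"] ballI)
        fix x assume "x \<in> P1 \<union> P0"
        then obtain i where i: "i \<in> I" "x = emb (g i)" using P1E P0E by blast
        have "(\<Sum>k\<in>D. ((if k \<in> C then s else 0) - x k)\<^sup>2) = (\<Sum>k\<in>D. if k \<in> M i then s\<^sup>2 else 0)"
        proof (intro sum.cong refl)
          fix k
          have "C \<inter> M i = {}" using CM i by simp
          then show "((if k \<in> C then s else 0) - x k)\<^sup>2 = (if k \<in> M i then s\<^sup>2 else 0)"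
            using val[OF i(1), of k] i(2) by auto
        qed
        also have "\<dots> = (\<Sum>k\<in>{k\<in>D. k \<in> M i}. s\<^sup>2)"
          using D by (simp only: sum.inter_filter)
        also have "{k\<in>D. k \<in> M i} = M i" using MD i by auto
        finally have "(\<Sum>k\<in>D. ((if k \<in> C then s else 0) - x k)\<^sup>2) = s\<^sup>2 * N" using MN i by simp
        then have "l2dist D (\<lambda>k. if k \<in> C then s else 0) x = sqrt (s\<^sup>2 * N)"
          by (simp add: l2dist_Q Q_def)
        also have "\<dots> \<le> sqrt (r\<^sup>2)" by (rule real_sqrt_le_mono[OF sr])
        also have "\<dots> = r" using r by simp
        finally show "l2dist D (\<lambda>k. if k \<in> C then s else 0) x \<le> r" .
      qed
      have hull: "\<forall>u\<in>chull P1. \<forall>v\<in>chull P0. 2 * lam \<le> l2dist D u v"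
      proof (intro ballI)
        fix u v assume u: "u \<in> chull P1" and v: "v \<in> chull P0"
        obtain S1 a where S1: "finite S1" "S1 \<noteq> {}" "S1 \<subseteq> P1" "sum a S1 = 1"
          and ue: "u = (\<lambda>k. \<Sum>x\<in>S1. a x * x k)"
          using u unfolding chull_def mem_Collect_eq by (elim exE conjE) blast
        obtain S0 b where S0: "finite S0" "S0 \<subseteq> P0"
          and ve: "v = (\<lambda>k. \<Sum>x\<in>S0. b x * x k)"
          using v unfolding chull_def mem_Collect_eq by (elim exE conjE) blast
        define I1 where "I1 = {i\<in>I. emb (g i) \<in> S1}"
        define I0 where "I0 = {i\<in>I. emb (g i) \<in> S0}"
        have S1e: "S1 = (\<lambda>i. emb (g i)) ` I1"
        proof
          show "S1 \<subseteq> (\<lambda>i. emb (g i)) ` I1"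
          proof
            fix x assume x: "x \<in> S1"
            then obtain i where "i \<in> I" "x = emb (g i)" using S1(3) P1E by blast
            then show "x \<in> (\<lambda>i. emb (g i)) ` I1" unfolding I1_def using x by blast
          qed
        qed (auto simp: I1_def)
        have S0e: "S0 = (\<lambda>i. emb (g i)) ` I0"
        proof
          show "S0 \<subseteq> (\<lambda>i. emb (g i)) ` I0"
          proof
            fix x assume x: "x \<in> S0"
            then obtain i where "i \<in> I" "x = emb (g i)" using S0(2) P0E by blast
            then show "x \<in> (\<lambda>i. emb (g i)) ` I0" unfolding I0_def using x by blast
          qed
        qed (auto simp: I0_def)
        have inj1: "inj_on (\<lambda>i. emb (g i)) I1" using eginj unfolding I1_def by (rule inj_on_subset) auto
        have inj0: "inj_on (\<lambda>i. emb (g i)) I0" using eginj unfolding I0_def by (rule inj_on_subset) auto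
        have fI1: "finite I1" "finite I0" using I unfolding I1_def I0_def by auto
        have I1ne: "I1 \<noteq> {}" using S1(2) S1e by auto
        have I10: "I1 \<inter> I0 = {}"
        proof (rule ccontr)
          assume "I1 \<inter> I0 \<noteq> {}"
          then obtain i where i: "i \<in> I" "emb (g i) \<in> S1" "emb (g i) \<in> S0" unfolding I1_def I0_def by blast
          obtain i1 where i1: "i1 \<in> I" "emb (g i) = emb (g i1)" "f (g i1)"
            using P1E[of "emb (g i)"] i S1(3) by blast
          obtain i0 where i0: "i0 \<in> I" "emb (g i) = emb (g i0)" "\<not> f (g i0)"
            using P0E[of "emb (g i)"] i S0(2) by blast
          have "i = i1" using inj_onD[OF eginj i1(2) i(1) i1(1)] .
          moreover have "i = i0" using inj_onD[OF eginj i0(2) i(1) i0(1)] .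
          ultimately show False using i1 i0 by simp
        qed
        have a1: "sum (\<lambda>i. a (emb (g i))) I1 = 1"
          using S1(4) unfolding S1e sum.reindex[OF inj1] by (simp add: comp_def)
        have ue2: "u k = (\<Sum>i\<in>I1. a (emb (g i)) * (if k \<in> C \<union> M i then s else 0))" for k
        proof -
          have "u k = (\<Sum>x\<in>S1. a x * x k)" using ue by simp
          also have "\<dots> = (\<Sum>i\<in>I1. a (emb (g i)) * emb (g i) k)"
            unfolding S1e by (subst sum.reindex[OF inj1]) simp
          also have "\<dots> = (\<Sum>i\<in>I1. a (emb (g i)) * (if k \<in> C \<union> M i then s else 0))"
            using val unfolding I1_def by (intro sum.cong refl) simp
          finally show ?thesis .
        qed
        have ve2: "v k = (\<Sum>i\<in>I0. b (emb (g i)) * (if k \<in> C \<union> M i then s else 0))" for k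
        proof -
          have "v k = (\<Sum>x\<in>S0. b x * x k)" using ve by simp
          also have "\<dots> = (\<Sum>i\<in>I0. b (emb (g i)) * emb (g i) k)"
            unfolding S0e by (subst sum.reindex[OF inj0]) simp
          also have "\<dots> = (\<Sum>i\<in>I0. b (emb (g i)) * (if k \<in> C \<union> M i then s else 0))"
            using val unfolding I0_def by (intro sum.cong refl) simp
          finally show ?thesis .
        qed
        have sub: "I1 \<subseteq> I" "I0 \<subseteq> I" unfolding I1_def I0_def by auto
        have hs: "s\<^sup>2 * real N / card I1 \<le> (\<Sum>k\<in>D. ((\<Sum>i\<in>I1. a (emb (g i)) * (if k \<in> C \<union> M i then s else 0))
          - (\<Sum>j\<in>I0. b (emb (g j)) * (if k \<in> C \<union> M j then s else 0)))\<^sup>2)"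
        proof (rule hull_sep[OF D fI1(1) I1ne fI1(2) _ _ _ _ I10 a1])
          show "\<forall>i\<in>I1. M i \<subseteq> D" using sub(1) MD by blast
          show "\<forall>i\<in>I1. card (M i) = N" using sub(1) MN by blast
          show "\<forall>i\<in>I1 \<union> I0. C \<inter> M i = {}" using sub CM by blast
          show "\<forall>i\<in>I1 \<union> I0. \<forall>j\<in>I1 \<union> I0. i \<noteq> j \<longrightarrow> M i \<inter> M j = {}"
          proof (intro ballI impI)
            fix i j assume "i \<in> I1 \<union> I0" "j \<in> I1 \<union> I0" "i \<noteq> j"
            then have "i \<in> I" "j \<in> I" using sub by auto
            then show "M i \<inter> M j = {}" using disj \<open>i \<noteq> j\<close> by simp
          qed
        qed
        have cI1: "0 < card I1" "card I1 \<le> card I" using fI1 I1ne I sub by (auto intro: card_mono)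
        have "4 * lam\<^sup>2 \<le> s\<^sup>2 * N / card I"
          using lamI cI1 by (simp add: field_simps)
        also have "\<dots> \<le> s\<^sup>2 * N / card I1"
          using cI1 by (intro divide_left_mono) auto
        also have "\<dots> \<le> Q D (\<lambda>k. u k - v k)" using hs unfolding Q_def ue2 ve2 .
        finally have "(2 * lam)\<^sup>2 \<le> Q D (\<lambda>k. u k - v k)" by (simp add: power_mult_distrib)
        then show "2 * lam \<le> l2dist D u v" unfolding l2dist_Q by (rule real_le_rsqrt)
      qed
      show "separable D r lam (emb ` {G \<in> S. h G = Some True}) (emb ` {G \<in> S. h G = Some False})"
        unfolding separable_def P1_def[symmetric] P0_def[symmetric] using ball hull by (rule conjI)
    qed
    moreover have "\<forall>x\<in>g ` I. h x = Some (f x)" unfolding h_def by simp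
    ultimately show "\<exists>h\<in>Hclass n D r lam emb. \<forall>x\<in>g ` I. h x = Some (f x)" by blast
  qed
  show ?thesis using ginj sh by simp
qed



definition dd :: "nat \<Rightarrow> nat \<Rightarrow> nat \<Rightarrow> nat" where
  "dd n i j = (if i \<le> j then j - i else j + n - i)"

definition Off :: "nat \<Rightarrow> nat \<Rightarrow> nat set" where
  "Off n k = {x. 1 \<le> x \<and> x \<le> k} \<union> {x. n - k \<le> x \<and> x < n}"

definition circ :: "nat \<Rightarrow> nat \<Rightarrow> (nat \<times> nat) set" where
  "circ n k = {(i, j). i < n \<and> j < n \<and> dd n i j \<in> Off n k}"

lemma circ_lgraphs:
  assumes "2 * k < n" shows "circ n k \<in> lgraphs n"
proof -
  have "(j, i) \<in> circ n k" if "(i, j) \<in> circ n k" for i j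
  proof -
    have ij: "i < n" "j < n" "dd n i j \<in> Off n k" using that unfolding circ_def by auto
    have "i \<noteq> j" using ij(3) assms unfolding dd_def Off_def by auto
    then have "dd n j i = n - dd n i j" using ij unfolding dd_def by auto
    moreover have "n - dd n i j \<in> Off n k" using ij(3) assms unfolding Off_def dd_def by auto
    ultimately show ?thesis using ij unfolding circ_def by auto
  qed
  moreover have "(v, v) \<notin> circ n k" for v using assms unfolding circ_def dd_def Off_def by auto
  ultimately show ?thesis unfolding lgraphs_def sym_def circ_def by auto
qed

lemma dd_inj: "v < n \<Longrightarrow> inj_on (dd n v) {0..<n}"
  unfolding inj_on_def dd_def by (auto split: if_splits)

lemma dd_img: assumes "v < n" shows "dd n v ` {0..<n} = {0..<n}"
proof (rule endo_inj_surj)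
  show "dd n v ` {0..<n} \<subseteq> {0..<n}" using assms unfolding dd_def by auto
qed (use dd_inj[OF assms] in auto)

lemma card_Off: assumes "2 * k < n" shows "card (Off n k) = 2 * k"
proof -
  have "Off n k = {1..k} \<union> {n-k..<n}" unfolding Off_def by auto
  moreover have "{1..k} \<inter> {n-k..<n} = {}" using assms by auto
  ultimately show ?thesis using assms by (simp add: card_Un_disjoint)
qed

lemma deg_circ:
  assumes "2 * k < n" "v < n"
  shows "card {u. (v, u) \<in> circ n k} = 2 * k"
proof -
  have e: "{u. (v, u) \<in> circ n k} = {u \<in> {0..<n}. dd n v u \<in> Off n k}"
    using assms unfolding circ_def by auto
  have "dd n v ` {u \<in> {0..<n}. dd n v u \<in> Off n k} = Off n k"
  proof
    show "Off n k \<subseteq> dd n v ` {u \<in> {0..<n}. dd n v u \<in> Off n k}"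
    proof
      fix x assume x: "x \<in> Off n k"
      then have "x \<in> {0..<n}" using assms unfolding Off_def by auto
      then obtain u where "u \<in> {0..<n}" "x = dd n v u" using dd_img[OF assms(2)] by blast
      then show "x \<in> dd n v ` {u \<in> {0..<n}. dd n v u \<in> Off n k}" using x by blast
    qed
  qed auto
  moreover have "inj_on (dd n v) {u \<in> {0..<n}. dd n v u \<in> Off n k}"
    using dd_inj[OF assms(2)] by (rule inj_on_subset) auto
  ultimately have "card {u \<in> {0..<n}. dd n v u \<in> Off n k} = card (Off n k)"
    by (metis card_image)
  then show ?thesis using e card_Off[OF assms(1)] by simp
qed

fun col :: "nat \<Rightarrow> nat \<Rightarrow> wlcol" where
  "col d 0 = Init"
| "col d (Suc t) = Step (col d t) (replicate_mset d (col d t))"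

lemma wl_reg:
  assumes F: "F \<subseteq> {0..<n} \<times> {0..<n}" and deg: "\<forall>v<n. card {u. (v, u) \<in> F} = d"
  shows "v < n \<Longrightarrow> wl F t v = col d t"
proof (induction t arbitrary: v)
  case 0
  then show ?case by simp
next
  case (Suc t)
  define N where "N = {u. (v, u) \<in> F}"
  have Nsub: "N \<subseteq> {0..<n}" using F unfolding N_def by auto
  then have finN: "finite N" using finite_subset by blast
  have "image_mset (wl F t) (mset_set N) = image_mset (\<lambda>_. col d t) (mset_set N)"
  proof (rule image_mset_cong)
    fix u assume "u \<in># mset_set N"
    then have "u \<in> N" using finN by simp
    then show "wl F t u = col d t" using Suc.IH Nsub by auto
  qed
  also have "\<dots> = replicate_mset d (col d t)"
    using image_mset_const_eq[of "col d t" "mset_set N"] deg Suc.prems unfolding N_def by simp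
  finally show ?case using Suc by (simp add: N_def)
qed

lemma col_inj: "col d (Suc t) = col d' (Suc t) \<Longrightarrow> d = d'"
  by (metis col.simps(2) size_replicate_mset wlcol.inject)

lemma iso_deg:
  assumes E: "E \<subseteq> {0..<n} \<times> {0..<n}" and deg: "\<forall>v<n. card {u. (v, u) \<in> E} = d"
    and iso: "graph_iso n E F"
  shows "\<forall>v<n. card {u. (v, u) \<in> F} = d"
proof (intro allI impI)
  fix v assume v: "v < n"
  obtain p where p: "bij_betw p {0..<n} {0..<n}" and F: "F = (\<lambda>(u, v). (p u, p v)) ` E"
    using iso unfolding graph_iso_def by blast
  have pinj: "inj_on p {0..<n}" using p by (simp add: bij_betw_def)
  obtain w where w: "w < n" "v = p w" using p v unfolding bij_betw_def by (metis atLeastLessThan_iff imageE zero_le)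
  have "{u. (v, u) \<in> F} = p ` {u. (w, u) \<in> E}"
  proof
    show "{u. (v, u) \<in> F} \<subseteq> p ` {u. (w, u) \<in> E}"
    proof
      fix u assume "u \<in> {u. (v, u) \<in> F}"
      then obtain a b where ab: "(a, b) \<in> E" "p a = v" "p b = u" unfolding F by auto
      have "a < n" using ab E by auto
      then have "a = w" using inj_onD[OF pinj] ab(2) w by auto
      then show "u \<in> p ` {u. (w, u) \<in> E}" using ab by auto
    qed
    show "p ` {u. (w, u) \<in> E} \<subseteq> {u. (v, u) \<in> F}" unfolding F using w by force
  qed
  moreover have "inj_on p {u. (w, u) \<in> E}" by (rule inj_on_subset[OF pinj]) (use E in auto)
  ultimately show "card {u. (v, u) \<in> F} = d" using deg w by (simp add: card_image)
qed

definition cls :: "nat \<Rightarrow> (nat \<times> nat) set \<Rightarrow> (nat \<times> nat) set set" where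
  "cls n E = {F \<in> lgraphs n. graph_iso n E F}"

lemma Gn_cls: "Gn n = cls n ` lgraphs n"
  unfolding Gn_def cls_def by simp

lemma iso_refl: "graph_iso n E E"
  unfolding graph_iso_def by (intro exI[of _ id]) auto

lemma some_rep: "E \<in> lgraphs n \<Longrightarrow> (SOME F. F \<in> cls n E) \<in> cls n E"
  by (rule someI[of _ E]) (simp add: cls_def iso_refl)

definition Cset :: "nat \<Rightarrow> coord set" where
  "Cset n = {(0, Init, j) | j. 1 \<le> j \<and> j \<le> n}"

definition Mset :: "nat \<Rightarrow> nat \<Rightarrow> nat \<Rightarrow> coord set" where
  "Mset n T d = {(t, col d t, j) | t j. 1 \<le> t \<and> t \<le> T \<and> 1 \<le> j \<and> j \<le> n}"

lemma K_char: "x \<in> Cset n \<union> Mset n T d \<longleftrightarrow> (\<exists>t j. x = (t, col d t, j) \<and> t \<le> T \<and> 1 \<le> j \<and> j \<le> n)"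
proof
  assume "x \<in> Cset n \<union> Mset n T d"
  then show "\<exists>t j. x = (t, col d t, j) \<and> t \<le> T \<and> 1 \<le> j \<and> j \<le> n"
  proof
    assume "x \<in> Cset n"
    then obtain j where "x = (0, Init, j)" "1 \<le> j" "j \<le> n" unfolding Cset_def by blast
    then show ?thesis by (intro exI[of _ 0] exI[of _ j]) simp
  next
    assume "x \<in> Mset n T d"
    then show ?thesis unfolding Mset_def by blast
  qed
next
  assume "\<exists>t j. x = (t, col d t, j) \<and> t \<le> T \<and> 1 \<le> j \<and> j \<le> n"
  then obtain t j where tj: "x = (t, col d t, j)" "t \<le> T" "1 \<le> j" "j \<le> n" by blast
  show "x \<in> Cset n \<union> Mset n T d"
  proof (cases "t = 0")
    case True
    then show ?thesis using tj unfolding Cset_def by simp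
  next
    case False
    then show ?thesis using tj unfolding Mset_def by auto
  qed
qed

lemma lgraphs_sub: "F \<in> lgraphs n \<Longrightarrow> F \<subseteq> {0..<n} \<times> {0..<n}"
  unfolding lgraphs_def by auto

lemma circ_wl:
  assumes "2 * k < n" "v < n" shows "wl (circ n k) t v = col (2 * k) t"
  using wl_reg[OF lgraphs_sub[OF circ_lgraphs[OF assms(1)]]] deg_circ[OF assms(1)] assms(2) by blast

lemma rep_wl:
  assumes "2 * k < n" "F \<in> cls n (circ n k)" "v < n" shows "wl F t v = col (2 * k) t"
proof -
  have F: "F \<in> lgraphs n" "graph_iso n (circ n k) F" using assms(2) unfolding cls_def by auto
  have "\<forall>v<n. card {u. (v, u) \<in> F} = 2 * k"
    using iso_deg[OF lgraphs_sub[OF circ_lgraphs[OF assms(1)]] _ F(2)] deg_circ[OF assms(1)] by blast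
  then show ?thesis using wl_reg[OF lgraphs_sub[OF F(1)]] assms(3) by blast
qed

lemma wloa_circ:
  assumes k: "2 * k < n"
  shows "wloa n T (cls n (circ n k)) = (\<lambda>x. if x \<in> Cset n \<union> Mset n T (2 * k) then 1 else 0)"
proof (rule ext)
  fix x :: coord
  obtain t c j where x: "x = (t, c, j)" by (cases x) auto
  define F where "F = (SOME F. F \<in> cls n (circ n k))"
  have F: "F \<in> cls n (circ n k)" unfolding F_def by (rule some_rep[OF circ_lgraphs[OF k]])
  have cc: "colcount n F t c = (if c = col (2 * k) t then n else 0)"
  proof -
    have "{v \<in> {0..<n}. wl F t v = c} = (if c = col (2 * k) t then {0..<n} else {})"
      using rep_wl[OF k F] by auto
    then show ?thesis unfolding colcount_def by simp
  qed
  have sig: "col (2 * k) t \<in> Sigma n t"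
  proof -
    have "wl (circ n k) t 0 = col (2 * k) t" using circ_wl[OF k, of 0 t] k by simp
    then show ?thesis unfolding Sigma_def using circ_lgraphs[OF k] k by (metis (mono_tags, lifting) CollectI gr_zeroI less_nat_zero_code)
  qed
  have "((t, c, j) \<in> wloa_coords n T \<and> j \<le> colcount n F t c) \<longleftrightarrow> (t, c, j) \<in> Cset n \<union> Mset n T (2 * k)"
    unfolding K_char cc wloa_coords_def using sig by auto
  then show "wloa n T (cls n (circ n k)) x = (if x \<in> Cset n \<union> Mset n T (2 * k) then 1 else 0)"
    unfolding wloa_def wloa_lab_def F_def[symmetric] x by simp
qed



lemma finite_Sigma: "finite (Sigma n t)"
proof -
  have "Sigma n t \<subseteq> (\<lambda>(E, v). wl E t v) ` (lgraphs n \<times> {0..<n})"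
    unfolding Sigma_def by auto
  then show ?thesis by (rule finite_subset) (simp add: finite_lgraphs)
qed

lemma finite_coords: "finite (wloa_coords n T)"
proof -
  have "wloa_coords n T \<subseteq> {..T} \<times> (\<Union>t\<in>{..T}. Sigma n t) \<times> {1..n}"
    unfolding wloa_coords_def by auto
  then show ?thesis by (rule finite_subset) (simp add: finite_Sigma)
qed

lemma col_Sigma: "2 * k < n \<Longrightarrow> col (2 * k) t \<in> Sigma n t"
proof -
  assume k: "2 * k < n"
  have "wl (circ n k) t 0 = col (2 * k) t" using circ_wl[OF k, of 0 t] k by simp
  then show ?thesis unfolding Sigma_def using circ_lgraphs[OF k] k
    by (metis (mono_tags, lifting) CollectI gr_zeroI less_nat_zero_code)
qed

lemma K_coords: "2 * k < n \<Longrightarrow> Cset n \<union> Mset n T (2 * k) \<subseteq> wloa_coords n T"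
proof
  fix x assume k: "2 * k < n" and "x \<in> Cset n \<union> Mset n T (2 * k)"
  then obtain t j where "x = (t, col (2 * k) t, j)" "t \<le> T" "1 \<le> j" "j \<le> n"
    unfolding K_char by blast
  then show "x \<in> wloa_coords n T" unfolding wloa_coords_def using col_Sigma[OF k] by simp
qed

lemma card_Mset: "card (Mset n T d) = T * n"
proof -
  have "Mset n T d = (\<lambda>(t, j). (t, col d t, j)) ` ({1..T} \<times> {1..n})"
    unfolding Mset_def by auto
  moreover have "inj_on (\<lambda>(t, j). (t, col d t, j)) ({1..T} \<times> {1..n})"
    by (auto simp: inj_on_def)
  ultimately show ?thesis by (simp add: card_image card_cartesian_product)
qed

lemma card_Cset: "card (Cset n) = n"
proof -
  have "Cset n = (\<lambda>j. (0, Init, j)) ` {1..n}" unfolding Cset_def by auto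
  moreover have "inj_on (\<lambda>j. (0::nat, Init, j)) {1..n}" by (auto simp: inj_on_def)
  ultimately show ?thesis by (simp add: card_image)
qed

lemma CM_disj: "Cset n \<inter> Mset n T d = {}"
  unfolding Cset_def Mset_def by auto

lemma MM_disj: "d \<noteq> d' \<Longrightarrow> Mset n T d \<inter> Mset n T d' = {}"
proof (rule ccontr)
  assume "d \<noteq> d'" "Mset n T d \<inter> Mset n T d' \<noteq> {}"
  then obtain t j t' j' where e: "(t, col d t, j) = (t', col d' t', j')" "1 \<le> t"
    unfolding Mset_def by blast
  then obtain t0 where "t = Suc t0" by (cases t) auto
  then have "d = d'" using e col_inj by auto
  then show False using \<open>d \<noteq> d'\<close> by simp
qed

lemma card_K: "card (Cset n \<union> Mset n T d) = n + T * n"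
proof -
  have "finite (Cset n)" unfolding Cset_def by (rule finite_subset[of _ "{0} \<times> {Init} \<times> {1..n}"]) auto
  moreover have "finite (Mset n T d)"
  proof -
    have "Mset n T d = (\<lambda>(t, j). (t, col d t, j)) ` ({1..T} \<times> {1..n})" unfolding Mset_def by auto
    then show ?thesis by simp
  qed
  ultimately show ?thesis using CM_disj card_Cset card_Mset by (simp add: card_Un_disjoint)
qed

lemma l2norm_ind:
  assumes "finite A" "K \<subseteq> A"
  shows "l2norm A (\<lambda>x. if x \<in> K then 1 else 0) = sqrt (real (card K))"
proof -
  have "(\<Sum>x\<in>A. (if x \<in> K then 1 else 0 :: real)\<^sup>2) = (\<Sum>x\<in>A. if x \<in> K then 1 else 0)"
    by (intro sum.cong) auto
  also have "\<dots> = (\<Sum>x\<in>{x\<in>A. x \<in> K}. 1)" using assms(1) by (simp only: sum.inter_filter)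
  also have "{x\<in>A. x \<in> K} = K" using assms(2) by auto
  finally show ?thesis unfolding l2norm_def by simp
qed

lemma wloa_norm_circ:
  assumes k: "2 * k < n"
  shows "wloa_norm n T (cls n (circ n k))
    = (\<lambda>x. if x \<in> Cset n \<union> Mset n T (2 * k) then 1 / sqrt (real (n + T * n)) else 0)"
proof -
  have "l2norm (wloa_coords n T) (wloa n T (cls n (circ n k))) = sqrt (real (n + T * n))"
    unfolding wloa_circ[OF k] using l2norm_ind[OF finite_coords K_coords[OF k]] card_K by simp
  then show ?thesis unfolding wloa_norm_def wloa_circ[OF k] by auto
qed

lemma family_vc:
  fixes s r lam :: real
  assumes n: "n \<ge> 1" and T: "T \<ge> 1" and m: "m \<le> (n + 1) div 2" and s: "s > 0" and r: "0 \<le> r"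
    and sr: "s\<^sup>2 * real (T * n) \<le> r\<^sup>2" and lm: "4 * lam\<^sup>2 * m \<le> s\<^sup>2 * real (T * n)" and lam: "lam > 0"
    and emb: "\<forall>k. 2 * k < n \<longrightarrow> emb (cls n (circ n k)) = (\<lambda>x. if x \<in> Cset n \<union> Mset n T (2 * k) then s else 0)"
  shows "m \<le> vc_dim (Hclass n (wloa_coords n T) r lam emb) (Gn n)"
proof -
  have km: "k < m \<Longrightarrow> 2 * k < n" for k using m by linarith
  have res: "inj_on (\<lambda>k. cls n (circ n k)) {..<m} \<and>
    shatters (Hclass n (wloa_coords n T) r lam emb) ((\<lambda>k. cls n (circ n k)) ` {..<m})"
  proof (rule shatter_family[where M = "\<lambda>k. Mset n T (2 * k)" and C = "Cset n" and N = "T * n" and s = s])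
    show "finite (wloa_coords n T)" by (rule finite_coords)
    show "finite {..<m}" by simp
    show "\<forall>i\<in>{..<m}. Mset n T (2 * i) \<subseteq> wloa_coords n T" using K_coords km by blast
    show "\<forall>i\<in>{..<m}. card (Mset n T (2 * i)) = T * n" by (simp add: card_Mset)
    show "0 < T * n" using n T by simp
    show "\<forall>i\<in>{..<m}. Cset n \<inter> Mset n T (2 * i) = {}" by (simp add: CM_disj)
    show "\<forall>i\<in>{..<m}. \<forall>j\<in>{..<m}. i \<noteq> j \<longrightarrow> Mset n T (2 * i) \<inter> Mset n T (2 * j) = {}"
      using MM_disj by auto
    show "\<forall>i\<in>{..<m}. cls n (circ n i) \<in> Gn n" unfolding Gn_cls using circ_lgraphs km by blast
    show "\<forall>i\<in>{..<m}. emb (cls n (circ n i)) = (\<lambda>k. if k \<in> Cset n \<union> Mset n T (2 * i) then s else 0)"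
      using emb km by blast
  qed (use s r sr lm lam in auto)
  have sub: "(\<lambda>k. cls n (circ n k)) ` {..<m} \<subseteq> Gn n" unfolding Gn_cls using circ_lgraphs km by blast
  have "card ((\<lambda>k. cls n (circ n k)) ` {..<m}) = m" using res by (simp add: card_image)
  then show ?thesis using vc_lower[OF sub] res by metis
qed

lemma lower_arith:
  fixes x V target :: real
  assumes all: "\<And>m::nat. 1 \<le> m \<Longrightarrow> real m \<le> x \<Longrightarrow> real m \<le> V"
    and V1: "1 \<le> V" and tx: "target \<le> 8 * x"
  shows "1 / 16 * target \<le> V"
proof (cases "x < 1")
  case True
  then show ?thesis using tx V1 by linarith
next
  case False
  define m where "m = nat \<lfloor>x\<rfloor>"
  have m1: "1 \<le> m" using False unfolding m_def by linarith
  have mx: "real m \<le> x" using False unfolding m_def by linarith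
  have f1: "1 \<le> \<lfloor>x\<rfloor>" using False by (simp add: le_floor_iff)
  have f2: "x - 1 < real_of_int \<lfloor>x\<rfloor>" by (rule real_of_int_floor_gt_diff_one)
  have f3: "real m = real_of_int \<lfloor>x\<rfloor>" unfolding m_def using f1 by simp
  have "x / 2 \<le> real m" using f1 f2 f3 by linarith
  then show ?thesis using all[OF m1 mx] tx by linarith
qed



lemma part1:
  fixes T n :: nat and lam :: real
  assumes T: "0 < T" and lam: "0 < lam"
    and h: "(sqrt (real (T + 1) * real n))\<^sup>2 / lam\<^sup>2 \<le> real n"
  shows "1 / 16 * ((sqrt (real (T + 1) * real n))\<^sup>2 / lam\<^sup>2)
             \<le> real (vc_dim (Hclass n (wloa_coords n T) (sqrt (real (T + 1) * real n)) lam (wloa n T)) (Gn n))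
         \<and> real (vc_dim (Hclass n (wloa_coords n T) (sqrt (real (T + 1) * real n)) lam (wloa n T)) (Gn n))
             \<le> 3 * max 1 ((sqrt (real (T + 1) * real n))\<^sup>2 / lam\<^sup>2)"
proof -
  define r where "r = sqrt (real (T + 1) * real n)"
  define V where "V = real (vc_dim (Hclass n (wloa_coords n T) r lam (wloa n T)) (Gn n))"
  have r2: "r\<^sup>2 = real (T + 1) * real n" unfolding r_def by simp
  have r0: "0 \<le> r" unfolding r_def by simp
  have V1: "1 \<le> V" unfolding V_def using vc_ge1[OF r0] by simp
  have up: "V \<le> 3 * max 1 (r\<^sup>2 / lam\<^sup>2)" unfolding V_def by (rule vc_upper[OF lam])
  have lam2: "0 < lam\<^sup>2" using lam by simp
  have low: "1 / 16 * (r\<^sup>2 / lam\<^sup>2) \<le> V"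
  proof (cases "n = 0")
    case True
    then show ?thesis using r2 V1 by simp
  next
    case False
    then have n1: "n \<ge> 1" by simp
    define x where "x = real T * real n / (4 * lam\<^sup>2)"
    have hn: "real (T + 1) * real n \<le> real n * lam\<^sup>2" using h r2 lam2 unfolding r_def[symmetric]
      by (simp add: divide_le_eq)
    show ?thesis
    proof (rule lower_arith[where x = x])
      fix m :: nat assume m1: "1 \<le> m" and mx: "real m \<le> x"
      have m4: "4 * lam\<^sup>2 * real m \<le> real T * real n"
        using mx lam2 unfolding x_def by (simp add: le_divide_eq mult.commute)
      have "real T * real n \<le> real (T + 1) * real n" by (intro mult_right_mono) auto
      then have "4 * lam\<^sup>2 * real m \<le> real (T + 1) * real n" using m4 by linarith
      then have "4 * lam\<^sup>2 * real m \<le> real n * lam\<^sup>2" using hn by linarith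
      then have "4 * real m \<le> real n" using lam2 by (simp add: mult.commute)
      then have "4 * m \<le> n" by linarith
      then have mm: "m \<le> (n + 1) div 2" by linarith
      have "m \<le> vc_dim (Hclass n (wloa_coords n T) r lam (wloa n T)) (Gn n)"
      proof (rule family_vc[where s = 1])
        have "real T * real n \<le> real (T + 1) * real n" by (intro mult_right_mono) auto
        then show "1\<^sup>2 * real (T * n) \<le> r\<^sup>2" using r2 by simp
        show "4 * lam\<^sup>2 * real m \<le> 1\<^sup>2 * real (T * n)" using m4 by simp
        show "\<forall>k. 2 * k < n \<longrightarrow> wloa n T (cls n (circ n k)) = (\<lambda>x. if x \<in> Cset n \<union> Mset n T (2 * k) then 1 else 0)"
          using wloa_circ by blast
      qed (use n1 T mm r0 lam in auto)
      then show "real m \<le> V" unfolding V_def by simp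
    next
      show "1 \<le> V" by (rule V1)
      have "r\<^sup>2 / lam\<^sup>2 = real (T + 1) * real n / lam\<^sup>2" using r2 by simp
      also have "\<dots> \<le> 2 * real T * real n / lam\<^sup>2"
        using T lam2 by (intro divide_right_mono) (auto intro: mult_right_mono)
      also have "\<dots> = 8 * x" unfolding x_def using lam2 by (simp add: field_simps)
      finally show "r\<^sup>2 / lam\<^sup>2 \<le> 8 * x" .
    qed
  qed
  show ?thesis using low up unfolding V_def r_def by simp
qed

lemma part2:
  fixes T n :: nat and lam :: real
  assumes T: "0 < T" and lam: "0 < lam"
    and h: "(sqrt (real T / real (T + 1)))\<^sup>2 / lam\<^sup>2 \<le> real n"
  shows "1 / 16 * (1 / lam\<^sup>2)
             \<le> real (vc_dim (Hclass n (wloa_coords n T) 1 lam (wloa_norm n T)) (Gn n))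
         \<and> real (vc_dim (Hclass n (wloa_coords n T) 1 lam (wloa_norm n T)) (Gn n))
             \<le> 3 * max 1 (1 / lam\<^sup>2)"
proof -
  define \<rho> where "\<rho> = real T / real (T + 1)"
  define V where "V = real (vc_dim (Hclass n (wloa_coords n T) 1 lam (wloa_norm n T)) (Gn n))"
  have r2: "(sqrt (real T / real (T + 1)))\<^sup>2 = \<rho>" unfolding \<rho>_def by simp
  have lam2: "0 < lam\<^sup>2" using lam by simp
  have V1: "1 \<le> V" unfolding V_def using vc_ge1[of 1] by simp
  have up: "V \<le> 3 * max 1 (1 / lam\<^sup>2)" unfolding V_def using vc_upper[OF lam, of n "wloa_coords n T" 1 "wloa_norm n T"] by simp
  have rpos: "0 < \<rho>" unfolding \<rho>_def using T by simp
  have rle1: "\<rho> \<le> 1" unfolding \<rho>_def by simp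
  have rhalf: "1 / 2 \<le> \<rho>" unfolding \<rho>_def using T by (simp add: field_simps)
  have "\<rho> / lam\<^sup>2 \<le> real n" using h unfolding r2 .
  then have hn: "\<rho> \<le> real n * lam\<^sup>2" using lam2 by (simp add: divide_le_eq)
  have n1: "n \<ge> 1"
  proof (rule ccontr)
    assume "\<not> n \<ge> 1" then have "n = 0" by simp
    then show False using hn rpos by simp
  qed
  define x where "x = \<rho> / (4 * lam\<^sup>2)"
  define s where "s = 1 / sqrt (real (n + T * n))"
  have "0 < n + T * n" using n1 by simp
  then have "0 < real (n + T * n)" by (simp only: of_nat_0_less_iff)
  then have spos: "0 < s" unfolding s_def by simp
  have s2: "s\<^sup>2 * real (T * n) = \<rho>"
  proof -
    have "s\<^sup>2 = 1 / real (n + T * n)" unfolding s_def by (simp add: power_divide)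
    moreover have "real (n + T * n) = real (T + 1) * real n" by (simp add: algebra_simps)
    ultimately have "s\<^sup>2 * real (T * n) = real T * real n / (real (T + 1) * real n)" by simp
    also have "\<dots> = real T / real (T + 1)" using n1 by simp
    finally show ?thesis unfolding \<rho>_def .
  qed
  have low: "1 / 16 * (1 / lam\<^sup>2) \<le> V"
  proof (rule lower_arith[where x = x])
    fix m :: nat assume m1: "1 \<le> m" and mx: "real m \<le> x"
    have m4: "4 * lam\<^sup>2 * real m \<le> \<rho>"
      using mx lam2 unfolding x_def by (simp add: le_divide_eq mult.commute)
    then have "4 * lam\<^sup>2 * real m \<le> real n * lam\<^sup>2" using hn by linarith
    then have "4 * real m \<le> real n" using lam2 by (simp add: mult.commute)
    then have "4 * m \<le> n" by linarith
    then have mm: "m \<le> (n + 1) div 2" by linarith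
    have "m \<le> vc_dim (Hclass n (wloa_coords n T) 1 lam (wloa_norm n T)) (Gn n)"
    proof (rule family_vc[where s = s])
      show "s\<^sup>2 * real (T * n) \<le> 1\<^sup>2" using s2 rle1 by simp
      show "4 * lam\<^sup>2 * real m \<le> s\<^sup>2 * real (T * n)" using m4 s2 by simp
      show "\<forall>k. 2 * k < n \<longrightarrow> wloa_norm n T (cls n (circ n k)) = (\<lambda>x. if x \<in> Cset n \<union> Mset n T (2 * k) then s else 0)"
        unfolding s_def using wloa_norm_circ by blast
    qed (use n1 T mm spos lam in auto)
    then show "real m \<le> V" unfolding V_def by simp
  next
    show "1 \<le> V" by (rule V1)
    have "1 / lam\<^sup>2 \<le> 2 * \<rho> / lam\<^sup>2"
      using rhalf lam2 by (intro divide_right_mono) auto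
    also have "\<dots> = 8 * x" unfolding x_def using lam2 by (simp add: field_simps)
    finally show "1 / lam\<^sup>2 \<le> 8 * x" .
  qed
  show ?thesis using low up unfolding V_def by simp
qed

theorem proposition6:
  shows
  "(\<exists>c1 c2 :: real. 0 < c1 \<and> 0 < c2 \<and>
     (\<forall>(T::nat) (lam::real) (n::nat). 0 < T \<longrightarrow> 0 < lam \<longrightarrow>
        (let r = sqrt (real (T + 1) * real n) in
         r\<^sup>2 / lam\<^sup>2 \<le> real n \<longrightarrow>
           c1 * (r\<^sup>2 / lam\<^sup>2)
             \<le> real (vc_dim (Hclass n (wloa_coords n T) r lam (wloa n T)) (Gn n))
         \<and> real (vc_dim (Hclass n (wloa_coords n T) r lam (wloa n T)) (Gn n))
             \<le> c2 * max 1 (r\<^sup>2 / lam\<^sup>2))))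
   \<and>
   (\<exists>c1 c2 :: real. 0 < c1 \<and> 0 < c2 \<and>
     (\<forall>(T::nat) (lam::real) (n::nat). 0 < T \<longrightarrow> 0 < lam \<longrightarrow>
        (let r = sqrt (real T / real (T + 1)) in
         r\<^sup>2 / lam\<^sup>2 \<le> real n \<longrightarrow>
           c1 * (1 / lam\<^sup>2)
             \<le> real (vc_dim (Hclass n (wloa_coords n T) 1 lam (wloa_norm n T)) (Gn n))
         \<and> real (vc_dim (Hclass n (wloa_coords n T) 1 lam (wloa_norm n T)) (Gn n))
             \<le> c2 * max 1 (1 / lam\<^sup>2))))"
proof (intro conjI)
  show "\<exists>c1 c2 :: real. 0 < c1 \<and> 0 < c2 \<and>
     (\<forall>(T::nat) (lam::real) (n::nat). 0 < T \<longrightarrow> 0 < lam \<longrightarrow>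
        (let r = sqrt (real (T + 1) * real n) in
         r\<^sup>2 / lam\<^sup>2 \<le> real n \<longrightarrow>
           c1 * (r\<^sup>2 / lam\<^sup>2)
             \<le> real (vc_dim (Hclass n (wloa_coords n T) r lam (wloa n T)) (Gn n))
         \<and> real (vc_dim (Hclass n (wloa_coords n T) r lam (wloa n T)) (Gn n))
             \<le> c2 * max 1 (r\<^sup>2 / lam\<^sup>2)))"
    by (intro exI[of _ "1/16"] exI[of _ 3] conjI allI impI; simp only: Let_def; intro impI part1) auto
  show "\<exists>c1 c2 :: real. 0 < c1 \<and> 0 < c2 \<and>
     (\<forall>(T::nat) (lam::real) (n::nat). 0 < T \<longrightarrow> 0 < lam \<longrightarrow>
        (let r = sqrt (real T / real (T + 1)) in
         r\<^sup>2 / lam\<^sup>2 \<le> real n \<longrightarrow>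
           c1 * (1 / lam\<^sup>2)
             \<le> real (vc_dim (Hclass n (wloa_coords n T) 1 lam (wloa_norm n T)) (Gn n))
         \<and> real (vc_dim (Hclass n (wloa_coords n T) 1 lam (wloa_norm n T)) (Gn n))
             \<le> c2 * max 1 (1 / lam\<^sup>2)))"
    by (intro exI[of _ "1/16"] exI[of _ 3] conjI allI impI; simp only: Let_def; intro impI part2) auto
qed

end
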